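(* Let $\alpha\ge0$, $\mu\ge0$. There is a positive constant $M$, independent of $n$, such that for all $g\in C_B[0,\infty)$, $n\in\mathbb{N}$ and $x\in[0,\infty)$, $$|T_n(g;x)-g(x)|\le 2M\left\{\min\!\left(1,\frac{\chi_n(x)}{2}\right)\|g\|_{C_B[0,\infty)}+\omega_2\!\left(g;\sqrt{\frac{\chi_n(x)}{2}}\right)\right\},$$ where $\chi_n(x)=\Delta_1+\Delta_2$ with $\Delta_1=\dfrac{2\alpha x^2}{n}$ and $\Delta_2=\dfrac{1}{n^2}x\left(4x^3\alpha^2+4\alpha x+n\right)+\dfrac{2\mu x}{n}\dfrac{e_\mu(-nx)}{e_\mu(nx)}$.
   Context: $C_B[0,\infty)$ denotes the space of uniformly continuous bounded functions on $[0,\infty)$ with sup norm. The second order modulus of continuity is $\omega_2(f;\delta)=\sup_{0<s\le\delta}\|f(\cdot+2s)-2f(\cdot+s)+f(\cdot)\|_{C_B[0,\infty)}$. For $\mu>-\tfrac12$ define $\gamma_\mu(2k)=\dfrac{2^{2k}k!\,\Gamma(k+\mu+1/2)}{\Gamma(\mu+1/2)}$ and $\gamma_\mu(2k+1)=\dfrac{2^{2k+1}k!\,\Gamma(k+\mu+3/2)}{\Gamma(\mu+1/2)}$, $k\ge0$; $e_\mu(x)=\sum_{k\ge0} x^k/\gamma_\mu(k)$; $\theta_k=0$ if $k$ is even and $\theta_k=1$ if $k$ is odd. Let $h_k^\mu(\xi,\alpha)=\gamma_\mu(k)\sum_{j=0}^{\lfloor k/2\rfloor}\dfrac{\alpha^j\xi^{k-2j}}{j!\,\gamma_\mu(k-2j)}$.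 For $\alpha\ge0,\mu\ge0$, $n\in\mathbb{N}$ and $x\in[0,\infty)$ define $$T_n(f;x)=\frac{1}{e^{\alpha x^2}e_\mu(nx)}\sum_{k=0}^\infty \frac{h_k^\mu(n,\alpha)}{\gamma_\mu(k)}x^k f\!\left(\frac{k+2\mu\theta_k}{n}\right).$$ *)

theory Defs
  imports "HOL-Analysis.Analysis"
begin

definition gamma_mu :: "real \<Rightarrow> nat \<Rightarrow> real" where
  "gamma_mu \<mu> m =
     (if even m then
        2 ^ (2 * (m div 2)) * fact (m div 2) * Gamma (real (m div 2) + \<mu> + 1/2) / Gamma (\<mu> + 1/2)
      else
        2 ^ (2 * (m div 2) + 1) * fact (m div 2) * Gamma (real (m div 2) + \<mu> + 3/2) / Gamma (\<mu> + 1/2))"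

definition e_mu :: "real \<Rightarrow> real \<Rightarrow> real" where
  "e_mu \<mu> x = (\<Sum>k. x ^ k / gamma_mu \<mu> k)"

definition theta :: "nat \<Rightarrow> real" where
  "theta k = (if even k then 0 else 1)"

definition h_mu :: "real \<Rightarrow> nat \<Rightarrow> real \<Rightarrow> real \<Rightarrow> real" where
  "h_mu \<mu> k \<xi> \<alpha> =
     gamma_mu \<mu> k * (\<Sum>j = 0..k div 2. \<alpha> ^ j * \<xi> ^ (k - 2 * j) / (fact j * gamma_mu \<mu> (k - 2 * j)))"

definition T_op :: "real \<Rightarrow> real \<Rightarrow> nat \<Rightarrow> (real \<Rightarrow> real) \<Rightarrow> real \<Rightarrow> real" where
  "T_op \<alpha> \<mu> n f x =
     1 / (exp (\<alpha> * x^2) * e_mu \<mu> (real n * x)) *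
     (\<Sum>k. h_mu \<mu> k (real n) \<alpha> / gamma_mu \<mu> k * x ^ k * f ((real k + 2 * \<mu> * theta k) / real n))"

definition supnorm :: "(real \<Rightarrow> real) \<Rightarrow> real" where
  "supnorm f = (SUP t\<in>{0..}. \<bar>f t\<bar>)"

text \<open>Second order modulus of continuity; for delta <= 0 the supremum is over
  the empty set and is taken to be 0.\<close>
definition omega2 :: "(real \<Rightarrow> real) \<Rightarrow> real \<Rightarrow> real" where
  "omega2 f \<delta> = (if \<delta> \<le> 0 then 0 else
     (SUP s\<in>{0<..\<delta>}. supnorm (\<lambda>t. f (t + 2 * s) - 2 * f (t + s) + f t)))"

definition chi :: "real \<Rightarrow> real \<Rightarrow> nat \<Rightarrow> real \<Rightarrow> real" where
  "chi \<alpha> \<mu> n x =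
     2 * \<alpha> * x^2 / real n
     + (1 / (real n)^2 * x * (4 * x^3 * \<alpha>^2 + 4 * \<alpha> * x + real n)
        + 2 * \<mu> * x / real n * (e_mu \<mu> (- (real n * x)) / e_mu \<mu> (real n * x)))"

end

theory Submission
  imports Defs
begin


lemma gm0: assumes "\<mu> \<ge> 0" shows "gamma_mu \<mu> 0 = 1"
proof -
  have "Gamma (\<mu> + 1/2) > 0" using assms by (intro Gamma_real_pos) auto
  thus ?thesis by (simp add: gamma_mu_def)
qed

lemma theta_Suc: "theta (Suc m) = 1 - theta m"
  by (simp add: theta_def)

lemma grec: assumes "\<mu> \<ge> 0"
  shows "gamma_mu \<mu> (Suc m) = (real (Suc m) + 2*\<mu>*theta (Suc m)) * gamma_mu \<mu> m"
proof (cases "even m")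
  case True
  then obtain k where m: "m = 2*k" by blast
  have d1: "Suc (2*k) div 2 = k" by simp
  have G: "Gamma (real k + \<mu> + 3/2) = (real k + \<mu> + 1/2) * Gamma (real k + \<mu> + 1/2)"
  proof -
    have "real k + \<mu> + 1/2 \<notin> \<int>\<^sub>\<le>\<^sub>0" using assms
      by (metis add_nonneg_pos nonpos_Ints_nonpos not_le of_nat_0_le_iff add_nonneg_nonneg half_gt_zero zero_less_one)
    from Gamma_plus1[OF this] show ?thesis by (simp add: add_ac)
  qed
  have L: "gamma_mu \<mu> (Suc m) = 2 ^ (2 * k + 1) * fact k * Gamma (real k + \<mu> + 3/2) / Gamma (\<mu> + 1/2)"
    unfolding m gamma_mu_def using d1 by simp
  have R: "gamma_mu \<mu> m = 2 ^ (2 * k) * fact k * Gamma (real k + \<mu> + 1/2) / Gamma (\<mu> + 1/2)"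
    unfolding m gamma_mu_def by simp
  have th: "theta (Suc m) = 1" unfolding m theta_def by simp
  have g0: "Gamma (\<mu> + 1/2) > 0" using assms by (intro Gamma_real_pos) auto
  have gen: "\<And>G0 X. G0 > 0 \<Longrightarrow> 2 ^ (2 * k + 1) * fact k * ((real k + \<mu> + 1/2) * X) / G0
     = (real (Suc m) + 2*\<mu>*1) * (2 ^ (2 * k) * fact k * X / G0)"
    by (simp add: m field_simps power_add)
  show ?thesis by (simp only: L R th G gen[OF g0])
next
  case False
  then obtain k where m: "m = 2*k+1" by (metis oddE)
  have d1: "Suc (2*k+1) div 2 = Suc k" by simp
  have e: "real (Suc k) + \<mu> + 1/2 = real k + \<mu> + 3/2" by simp
  have ev: "even (Suc (2*k+1))" by simp
  have L: "gamma_mu \<mu> (Suc m) = 2 ^ (2 * Suc k) * fact (Suc k) * Gamma (real k + \<mu> + 3/2) / Gamma (\<mu> + 1/2)"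
    unfolding m gamma_mu_def using d1 e ev by (simp add: add_ac)
  have R: "gamma_mu \<mu> m = 2 ^ (2 * k + 1) * fact k * Gamma (real k + \<mu> + 3/2) / Gamma (\<mu> + 1/2)"
    unfolding m gamma_mu_def by simp
  have th: "theta (Suc m) = 0" unfolding m theta_def by simp
  have g0: "Gamma (\<mu> + 1/2) > 0" using assms by (intro Gamma_real_pos) auto
  have gen: "\<And>G0 X. G0 > 0 \<Longrightarrow> 2 ^ (2 * Suc k) * fact (Suc k) * X / G0
     = (real (Suc m) + 2*\<mu>*0) * (2 ^ (2 * k + 1) * fact k * X / G0)"
    by (simp add: m field_simps power_add)
  show ?thesis by (simp only: L R th gen[OF g0])
qed

lemma gpos: assumes "\<mu> \<ge> 0" shows "gamma_mu \<mu> m > 0"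
proof (induction m)
  case 0 thus ?case using gm0[OF assms] by simp
next
  case (Suc m)
  have "theta (Suc m) \<ge> 0" by (simp add: theta_def)
  hence "real (Suc m) + 2*\<mu>*theta (Suc m) > 0" using assms by (smt (verit) mult_nonneg_nonneg of_nat_0_less_iff zero_less_Suc)
  thus ?case using Suc grec[OF assms] by simp
qed

lemma gfact: assumes "\<mu> \<ge> 0" shows "fact m \<le> gamma_mu \<mu> m"
proof (induction m)
  case 0 thus ?case using gm0[OF assms] by simp
next
  case (Suc m)
  have "theta (Suc m) \<ge> 0" by (simp add: theta_def)
  hence h: "real (Suc m) \<le> real (Suc m) + 2*\<mu>*theta (Suc m)" using assms by simp
  have "fact (Suc m) = real (Suc m) * fact m" by simp
  also have "\<dots> \<le> (real (Suc m) + 2*\<mu>*theta (Suc m)) * gamma_mu \<mu> m"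
    using Suc h by (intro mult_mono) auto
  finally show ?case using grec[OF assms] by simp
qed



definition bm :: "real \<Rightarrow> real \<Rightarrow> nat \<Rightarrow> real" where
  "bm \<mu> z m = z ^ m / gamma_mu \<mu> m"
definition sf :: "real \<Rightarrow> nat \<Rightarrow> real" where
  "sf \<mu> m = real m + 2 * \<mu> * theta m"

lemma sf0[simp]: "sf \<mu> 0 = 0" by (simp add: sf_def theta_def)

lemma sf_nonneg: "\<mu> \<ge> 0 \<Longrightarrow> sf \<mu> m \<ge> 0" by (simp add: sf_def theta_def)

lemma bm_nonneg: "\<mu> \<ge> 0 \<Longrightarrow> z \<ge> 0 \<Longrightarrow> bm \<mu> z m \<ge> 0"
  using gpos[of \<mu> m] by (simp add: bm_def)

lemma b_summable: assumes "\<mu> \<ge> 0" shows "summable (bm \<mu> z)"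
proof (rule summable_comparison_test')
  show "summable (\<lambda>n. inverse (fact n) * \<bar>z\<bar>^n)" by (rule summable_exp)
  fix n :: nat
  have "norm (bm \<mu> z n) = \<bar>z\<bar>^n / gamma_mu \<mu> n" using gpos[OF assms, of n]
    by (simp add: bm_def power_abs)
  also have "\<dots> \<le> \<bar>z\<bar>^n / fact n"
    using gfact[OF assms, of n] gpos[OF assms, of n] by (intro divide_left_mono) auto
  finally show "norm (bm \<mu> z n) \<le> inverse (fact n) * \<bar>z\<bar>^n" by (simp add: field_simps)
qed

lemma b_sums: assumes "\<mu> \<ge> 0" shows "bm \<mu> z sums e_mu \<mu> z"
proof -
  have "bm \<mu> z = (\<lambda>k. z^k / gamma_mu \<mu> k)" by (rule ext) (simp add: bm_def)
  hence "e_mu \<mu> z = suminf (bm \<mu> z)" by (simp add: e_mu_def)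
  thus ?thesis using summable_sums[OF b_summable[OF assms]] by simp
qed

lemma b_Suc: assumes "\<mu> \<ge> 0" shows "sf \<mu> (Suc m) * bm \<mu> z (Suc m) = z * bm \<mu> z m"
  using grec[OF assms, of m] gpos[OF assms, of m] gpos[OF assms, of "Suc m"]
  by (simp add: sf_def bm_def field_simps)

lemma b1_sums: assumes "\<mu> \<ge> 0" shows "(\<lambda>m. sf \<mu> m * bm \<mu> z m) sums (z * e_mu \<mu> z)"
proof -
  have "(\<lambda>m. sf \<mu> (Suc m) * bm \<mu> z (Suc m)) sums (z * e_mu \<mu> z)"
    unfolding b_Suc[OF assms] by (rule sums_mult[OF b_sums[OF assms]])
  thus ?thesis by (subst (asm) sums_Suc_iff) simp
qed

lemma theta_b: "theta m * bm \<mu> z m = (bm \<mu> z m - bm \<mu> (-z) m) / 2"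
  by (cases "even m") (auto simp: theta_def bm_def)

lemma b2_sums: assumes "\<mu> \<ge> 0"
  shows "(\<lambda>m. (sf \<mu> m)^2 * bm \<mu> z m) sums
           (z * (z * e_mu \<mu> z + e_mu \<mu> z + 2 * \<mu> * e_mu \<mu> (-z)))"
proof -
  have eq: "(sf \<mu> (Suc m))^2 * bm \<mu> z (Suc m) =
     z * (sf \<mu> m * bm \<mu> z m) + z * (1 + 2*\<mu>) * bm \<mu> z m
       - 2*\<mu>*z * (bm \<mu> z m - bm \<mu> (-z) m)" for m
  proof -
    have s: "sf \<mu> (Suc m) = sf \<mu> m + 1 + 2*\<mu> - 4*\<mu>*theta m"
      by (simp add: sf_def theta_Suc algebra_simps)
    have "(sf \<mu> (Suc m))^2 * bm \<mu> z (Suc m) = sf \<mu> (Suc m) * (z * bm \<mu> z m)"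
      using b_Suc[OF assms, of m] by (simp add: power2_eq_square)
    also have "\<dots> = z * (sf \<mu> m * bm \<mu> z m) + z * (1 + 2*\<mu>) * bm \<mu> z m
       - 4*\<mu>*z * (theta m * bm \<mu> z m)" unfolding s by (simp add: algebra_simps)
    also have "\<dots> = z * (sf \<mu> m * bm \<mu> z m) + z * (1 + 2*\<mu>) * bm \<mu> z m
       - 2*\<mu>*z * (bm \<mu> z m - bm \<mu> (-z) m)" unfolding theta_b by (simp add: field_simps)
    finally show ?thesis .
  qed
  have "(\<lambda>m. z * (sf \<mu> m * bm \<mu> z m) + z * (1 + 2*\<mu>) * bm \<mu> z m
       - 2*\<mu>*z * (bm \<mu> z m - bm \<mu> (-z) m)) sums
      (z * (z * e_mu \<mu> z) + z * (1 + 2*\<mu>) * e_mu \<mu> z - 2*\<mu>*z*(e_mu \<mu> z - e_mu \<mu> (-z)))"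
    by (intro sums_diff sums_add sums_mult b1_sums b_sums assms)
  hence "(\<lambda>m. (sf \<mu> (Suc m))^2 * bm \<mu> z (Suc m)) sums
      (z * (z * e_mu \<mu> z + e_mu \<mu> z + 2 * \<mu> * e_mu \<mu> (-z)))"
    unfolding eq by (simp add: algebra_simps)
  thus ?thesis by (subst (asm) sums_Suc_iff) simp
qed

definition aj :: "real \<Rightarrow> nat \<Rightarrow> real" where
  "aj y j = y ^ j / fact j"

lemma a_sums: "aj y sums exp y"
proof -
  have "aj y = (\<lambda>n. inverse (fact n) * y^n)" by (rule ext) (simp add: aj_def divide_inverse mult.commute)
  thus ?thesis using exp_converges[of y] by (simp add: scaleR_conv_of_real divide_inverse mult.commute)
qed

lemma a_Suc: "real (Suc j) * aj y (Suc j) = y * aj y j"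
proof -
  have f: "fact (Suc j) = real (Suc j) * (fact j :: real)" by simp
  show ?thesis unfolding aj_def f by (simp del: of_nat_Suc)
qed

lemma a1_sums: "(\<lambda>j. real j * aj y j) sums (y * exp y)"
proof -
  have "(\<lambda>j. real (Suc j) * aj y (Suc j)) sums (y * exp y)"
    unfolding a_Suc by (rule sums_mult[OF a_sums])
  thus ?thesis by (subst (asm) sums_Suc_iff) simp
qed

lemma a2_sums: "(\<lambda>j. (real j)^2 * aj y j) sums ((y^2 + y) * exp y)"
proof -
  have eq: "(real (Suc j))^2 * aj y (Suc j) = y * (real j * aj y j) + y * aj y j" for j
  proof -
    have "(real (Suc j))^2 * aj y (Suc j) = real (Suc j) * (real (Suc j) * aj y (Suc j))"
      by (simp add: power2_eq_square)
    also have "\<dots> = real (Suc j) * (y * aj y j)" unfolding a_Suc ..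
    finally show ?thesis by (simp add: algebra_simps)
  qed
  have "(\<lambda>j. y * (real j * aj y j) + y * aj y j) sums (y * (y * exp y) + y * exp y)"
    by (intro sums_add sums_mult a1_sums a_sums)
  hence "(\<lambda>j. (real (Suc j))^2 * aj y (Suc j)) sums ((y^2 + y) * exp y)"
    unfolding eq by (simp add: algebra_simps power2_eq_square)
  thus ?thesis by (subst (asm) sums_Suc_iff) simp
qed

lemma aj_nonneg: "y \<ge> 0 \<Longrightarrow> aj y j \<ge> 0" by (simp add: aj_def)



lemma prod_has_sum:
  fixes u v :: "nat \<Rightarrow> real"
  assumes hu: "(u has_sum U) UNIV" and hv: "(v has_sum V) UNIV"
    and u0: "\<And>j. u j \<ge> 0" and v0: "\<And>m. v m \<ge> 0"
  shows "((\<lambda>(j,m). u j * v m) has_sum (U*V)) UNIV"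
proof -
  have U0: "U \<ge> 0" using hu u0 by (meson has_sum_nonneg)
  have summ: "(\<lambda>(j,m). u j * v m) summable_on UNIV"
  proof (rule nonneg_bdd_above_summable_on)
    show "\<And>x. x \<in> UNIV \<Longrightarrow> 0 \<le> (case x of (j, m) \<Rightarrow> u j * v m)"
      using u0 v0 by (auto intro: mult_nonneg_nonneg)
    show "bdd_above (sum (\<lambda>(j,m). u j * v m) ` {F. F \<subseteq> UNIV \<and> finite F})"
    proof (rule bdd_aboveI2)
      fix F :: "(nat \<times> nat) set" assume "F \<in> {F. F \<subseteq> UNIV \<and> finite F}"
      hence fin: "finite F" by simp
      have "sum (\<lambda>(j,m). u j * v m) F \<le> sum (\<lambda>(j,m). u j * v m) (fst ` F \<times> snd ` F)"
        using fin u0 v0 by (intro sum_mono2) (auto intro: mult_nonneg_nonneg, force+)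
      also have "\<dots> = sum u (fst ` F) * sum v (snd ` F)"
        by (simp add: sum_product sum.cartesian_product)
      also have "\<dots> \<le> U * V"
        using finite_sum_le_has_sum[OF hu, of "fst ` F"] finite_sum_le_has_sum[OF hv, of "snd ` F"]
          fin u0 v0 U0 by (intro mult_mono) (auto intro: sum_nonneg)
      finally show "sum (\<lambda>(j,m). u j * v m) F \<le> U * V" .
    qed
  qed
  have "((\<lambda>(j,m). u j * v m) has_sum (U*V)) (Sigma UNIV (\<lambda>_. UNIV))"
  proof (rule has_sum_SigmaI)
    show "((\<lambda>y. case (j, y) of (j, m) \<Rightarrow> u j * v m) has_sum u j * V) UNIV" for j
      using has_sum_cmult_right[OF hv, of "u j"] by simp
    show "((\<lambda>j. u j * V) has_sum U * V) UNIV" by (rule has_sum_cmult_left[OF hu])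
    show "(\<lambda>(j,m). u j * v m) summable_on Sigma UNIV (\<lambda>_. UNIV)" using summ by simp
  qed
  thus ?thesis by simp
qed

lemma sums_hs: "f sums (S::real) \<Longrightarrow> (\<And>n. f n \<ge> 0) \<Longrightarrow> (f has_sum S) UNIV"
  by (rule sums_nonneg_imp_has_sum)

definition wt :: "real \<Rightarrow> real \<Rightarrow> real \<Rightarrow> nat \<times> nat \<Rightarrow> real" where
  "wt \<mu> y z p = aj y (fst p) * bm \<mu> z (snd p)"
definition tt :: "real \<Rightarrow> nat \<Rightarrow> nat \<times> nat \<Rightarrow> real" where
  "tt \<mu> n p = (2 * real (fst p) + sf \<mu> (snd p)) / real n"

lemma wt_nonneg: "\<mu> \<ge> 0 \<Longrightarrow> y \<ge> 0 \<Longrightarrow> z \<ge> 0 \<Longrightarrow> wt \<mu> y z p \<ge> 0"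
  using aj_nonneg bm_nonneg by (simp add: wt_def)

lemma tt_nonneg: "\<mu> \<ge> 0 \<Longrightarrow> tt \<mu> n p \<ge> 0"
  using sf_nonneg by (simp add: tt_def)

context
  fixes \<mu> y z :: real
  assumes mu: "\<mu> \<ge> 0" and y: "y \<ge> 0" and z: "z \<ge> 0"
begin

lemma hsA0: "(aj y has_sum exp y) UNIV" by (rule sums_hs[OF a_sums aj_nonneg[OF y]])
lemma hsA1: "((\<lambda>j. real j * aj y j) has_sum (y * exp y)) UNIV"
  by (rule sums_hs[OF a1_sums]) (simp add: aj_nonneg[OF y])
lemma hsA2: "((\<lambda>j. (real j)^2 * aj y j) has_sum ((y^2+y) * exp y)) UNIV"
  by (rule sums_hs[OF a2_sums]) (simp add: aj_nonneg[OF y])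
lemma hsB0: "(bm \<mu> z has_sum e_mu \<mu> z) UNIV"
  by (rule sums_hs[OF b_sums[OF mu] bm_nonneg[OF mu z]])
lemma hsB1: "((\<lambda>m. sf \<mu> m * bm \<mu> z m) has_sum (z * e_mu \<mu> z)) UNIV"
  by (rule sums_hs[OF b1_sums[OF mu]]) (simp add: bm_nonneg[OF mu z] sf_nonneg[OF mu])
lemma hsB2: "((\<lambda>m. (sf \<mu> m)^2 * bm \<mu> z m) has_sum
     (z * (z * e_mu \<mu> z + e_mu \<mu> z + 2 * \<mu> * e_mu \<mu> (-z)))) UNIV"
  by (rule sums_hs[OF b2_sums[OF mu]]) (simp add: bm_nonneg[OF mu z])

lemma W0: "(wt \<mu> y z has_sum (exp y * e_mu \<mu> z)) UNIV"
proof -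
  have "((\<lambda>(j,m). aj y j * bm \<mu> z m) has_sum (exp y * e_mu \<mu> z)) UNIV"
    by (rule prod_has_sum[OF hsA0 hsB0 aj_nonneg[OF y] bm_nonneg[OF mu z]])
  moreover have "(\<lambda>(j,m). aj y j * bm \<mu> z m) = wt \<mu> y z" by (auto simp: wt_def)
  ultimately show ?thesis by simp
qed

lemma W1: assumes n: "n \<ge> 1"
  shows "((\<lambda>p. wt \<mu> y z p * tt \<mu> n p) has_sum
      (exp y * e_mu \<mu> z * ((2 * y + z) / real n))) UNIV"
proof -
  have h1: "((\<lambda>(j,m). (real j * aj y j) * bm \<mu> z m) has_sum (y * exp y * e_mu \<mu> z)) UNIV"
    by (rule prod_has_sum[OF hsA1 hsB0]) (auto simp: aj_nonneg[OF y] bm_nonneg[OF mu z])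
  have h2: "((\<lambda>(j,m). aj y j * (sf \<mu> m * bm \<mu> z m)) has_sum (exp y * (z * e_mu \<mu> z))) UNIV"
    by (rule prod_has_sum[OF hsA0 hsB1]) (auto simp: aj_nonneg[OF y] bm_nonneg[OF mu z] sf_nonneg[OF mu])
  have "((\<lambda>p. (2 * (case p of (j,m) \<Rightarrow> (real j * aj y j) * bm \<mu> z m)
            + (case p of (j,m) \<Rightarrow> aj y j * (sf \<mu> m * bm \<mu> z m))) / real n) has_sum
        ((2 * (y * exp y * e_mu \<mu> z) + exp y * (z * e_mu \<mu> z)) / real n)) UNIV"
    using has_sum_cmult_left[OF has_sum_add[OF has_sum_cmult_right[OF h1, of 2] h2], of "1/real n"]
    by simp
  moreover have "(\<lambda>p. (2 * (case p of (j,m) \<Rightarrow> (real j * aj y j) * bm \<mu> z m)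
            + (case p of (j,m) \<Rightarrow> aj y j * (sf \<mu> m * bm \<mu> z m))) / real n)
     = (\<lambda>p. wt \<mu> y z p * tt \<mu> n p)"
    by (auto simp: wt_def tt_def field_simps)
  ultimately show ?thesis by (simp add: field_simps)
qed

lemma W2: assumes n: "n \<ge> 1"
  shows "((\<lambda>p. wt \<mu> y z p * (tt \<mu> n p)^2) has_sum
      (exp y * ((4*(y^2+y) * e_mu \<mu> z + 4 * y * z * e_mu \<mu> z
        + z * (z * e_mu \<mu> z + e_mu \<mu> z + 2 * \<mu> * e_mu \<mu> (-z))) / (real n)^2))) UNIV"
proof -
  have h1: "((\<lambda>(j,m). ((real j)^2 * aj y j) * bm \<mu> z m) has_sum ((y^2+y) * exp y * e_mu \<mu> z)) UNIV"
    by (rule prod_has_sum[OF hsA2 hsB0]) (auto simp: aj_nonneg[OF y] bm_nonneg[OF mu z])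
  have h2: "((\<lambda>(j,m). (real j * aj y j) * (sf \<mu> m * bm \<mu> z m)) has_sum (y * exp y * (z * e_mu \<mu> z))) UNIV"
    by (rule prod_has_sum[OF hsA1 hsB1]) (auto simp: aj_nonneg[OF y] bm_nonneg[OF mu z] sf_nonneg[OF mu])
  have h3: "((\<lambda>(j,m). aj y j * ((sf \<mu> m)^2 * bm \<mu> z m)) has_sum
       (exp y * (z * (z * e_mu \<mu> z + e_mu \<mu> z + 2 * \<mu> * e_mu \<mu> (-z))))) UNIV"
    by (rule prod_has_sum[OF hsA0 hsB2]) (auto simp: aj_nonneg[OF y] bm_nonneg[OF mu z])
  have "((\<lambda>p. (4 * (case p of (j,m) \<Rightarrow> ((real j)^2 * aj y j) * bm \<mu> z m)
            + 4 * (case p of (j,m) \<Rightarrow> (real j * aj y j) * (sf \<mu> m * bm \<mu> z m))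
            + (case p of (j,m) \<Rightarrow> aj y j * ((sf \<mu> m)^2 * bm \<mu> z m))) * (1 / (real n)^2)) has_sum
        ((4 * ((y^2+y) * exp y * e_mu \<mu> z) + 4 * (y * exp y * (z * e_mu \<mu> z))
          + exp y * (z * (z * e_mu \<mu> z + e_mu \<mu> z + 2 * \<mu> * e_mu \<mu> (-z)))) * (1 / (real n)^2))) UNIV"
    by (intro has_sum_cmult_left has_sum_add has_sum_cmult_right h1 h2 h3)
  moreover have "(\<lambda>p. (4 * (case p of (j,m) \<Rightarrow> ((real j)^2 * aj y j) * bm \<mu> z m)
            + 4 * (case p of (j,m) \<Rightarrow> (real j * aj y j) * (sf \<mu> m * bm \<mu> z m))
            + (case p of (j,m) \<Rightarrow> aj y j * ((sf \<mu> m)^2 * bm \<mu> z m))) * (1 / (real n)^2))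
     = (\<lambda>p. wt \<mu> y z p * (tt \<mu> n p)^2)"
    by (auto simp: wt_def tt_def field_simps power2_eq_square)
  ultimately show ?thesis by (simp add: field_simps)
qed

end



lemma E_ge1: assumes mu: "\<mu> \<ge> 0" and z: "z \<ge> 0" shows "e_mu \<mu> z \<ge> 1"
proof -
  have "sum (bm \<mu> z) {0} \<le> e_mu \<mu> z"
    by (rule finite_sum_le_has_sum[OF hsB0[OF mu order_refl z]]) (auto simp: bm_nonneg[OF mu z])
  thus ?thesis using gm0[OF mu] by (simp add: bm_def)
qed

lemma theta_diff: "2 * j \<le> k \<Longrightarrow> theta (k - 2 * j) = theta k"
  by (simp add: theta_def even_diff_nat)

lemma term_eq:
  assumes mu: "\<mu> \<ge> 0"
  shows "h_mu \<mu> k (real n) \<alpha> / gamma_mu \<mu> k * x ^ k * g ((real k + 2 * \<mu> * theta k) / real n)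
    = (\<Sum>j = 0..k div 2. wt \<mu> (\<alpha> * x^2) (real n * x) (j, k - 2*j) * g (tt \<mu> n (j, k - 2*j)))"
proof -
  have gk: "gamma_mu \<mu> k \<noteq> 0" using gpos[OF mu] by (simp add: less_imp_neq[symmetric])
  have "h_mu \<mu> k (real n) \<alpha> / gamma_mu \<mu> k * x ^ k * g ((real k + 2 * \<mu> * theta k) / real n)
      = (\<Sum>j = 0..k div 2. \<alpha> ^ j * real n ^ (k - 2 * j) / (fact j * gamma_mu \<mu> (k - 2 * j))
          * x ^ k * g ((real k + 2 * \<mu> * theta k) / real n))"
    unfolding h_mu_def using gk by (simp add: sum_distrib_right)
  also have "\<dots> = (\<Sum>j = 0..k div 2. wt \<mu> (\<alpha> * x^2) (real n * x) (j, k - 2*j) * g (tt \<mu> n (j, k - 2*j)))"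
  proof (rule sum.cong[OF refl])
    fix j assume "j \<in> {0..k div 2}"
    hence jk: "2 * j \<le> k" by auto
    have xk: "x ^ k = (x^2)^j * x ^ (k - 2*j)"
      using jk by (simp add: power_mult[symmetric] power_add[symmetric])
    have tt: "tt \<mu> n (j, k - 2*j) = (real k + 2 * \<mu> * theta k) / real n"
      using jk by (simp add: tt_def sf_def theta_diff of_nat_diff)
    show "\<alpha> ^ j * real n ^ (k - 2 * j) / (fact j * gamma_mu \<mu> (k - 2 * j))
          * x ^ k * g ((real k + 2 * \<mu> * theta k) / real n)
        = wt \<mu> (\<alpha> * x^2) (real n * x) (j, k - 2*j) * g (tt \<mu> n (j, k - 2*j))"
      unfolding tt xk by (simp add: wt_def aj_def bm_def power_mult_distrib field_simps)
  qed
  finally show ?thesis .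
qed

lemma T_pairs:
  assumes mu: "\<mu> \<ge> 0" and al: "\<alpha> \<ge> 0" and x: "x \<ge> 0" and n: "n \<ge> 1"
    and B: "\<And>t. t \<ge> 0 \<Longrightarrow> \<bar>g t\<bar> \<le> Bd"
  shows "((\<lambda>p. wt \<mu> (\<alpha> * x^2) (real n * x) p * g (tt \<mu> n p)) has_sum
           (exp (\<alpha> * x^2) * e_mu \<mu> (real n * x) * T_op \<alpha> \<mu> n g x)) UNIV"
proof -
  define y where "y = \<alpha> * x^2"
  define z where "z = real n * x"
  have y: "y \<ge> 0" and z: "z \<ge> 0" using al x by (auto simp: y_def z_def)
  define F where "F p = wt \<mu> y z p * g (tt \<mu> n p)" for p
  have "(\<lambda>p. norm (F p)) summable_on UNIV"
  proof (rule Infinite_Sum.abs_summable_on_comparison_test)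
    show "(\<lambda>p. norm (Bd * wt \<mu> y z p)) summable_on UNIV"
      using has_sum_cmult_right[OF W0[OF mu y z], of Bd] wt_nonneg[OF mu y z]
      by (metis (no_types, lifting) has_sum_imp_summable summable_on_cong abs_summable_on_comparison_test
          summable_on_iff_abs_summable_on_real)
    show "norm (F p) \<le> norm (Bd * wt \<mu> y z p)" if "p \<in> UNIV" for p
    proof -
      have "norm (F p) = wt \<mu> y z p * \<bar>g (tt \<mu> n p)\<bar>"
        using wt_nonneg[OF mu y z] by (simp add: F_def abs_mult)
      also have "\<dots> \<le> wt \<mu> y z p * Bd"
        using B[OF tt_nonneg[OF mu]] wt_nonneg[OF mu y z] by (intro mult_left_mono) auto
      also have "\<dots> \<le> norm (Bd * wt \<mu> y z p)" by (simp add: mult.commute)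
      finally show ?thesis .
    qed
  qed
  hence "F summable_on UNIV" by (rule abs_summable_summable)
  then obtain S where hS: "(F has_sum S) UNIV" by (auto simp: summable_on_def)
  define A where "A = Sigma (UNIV :: nat set) (\<lambda>k. {0..k div 2})"
  have hA: "((\<lambda>q. F (snd q, fst q - 2 * snd q)) has_sum S) A"
  proof -
    have "((\<lambda>q. F (snd q, fst q - 2 * snd q)) has_sum S) A = (F has_sum S) UNIV"
      by (rule has_sum_reindex_bij_witness[where i = "\<lambda>(j,m). (2*j+m, j)" and j = "\<lambda>q. (snd q, fst q - 2 * snd q)"])
        (auto simp: A_def)
    thus ?thesis using hS by simp
  qed
  have hk: "((\<lambda>k. \<Sum>j = 0..k div 2. F (j, k - 2*j)) has_sum S) UNIV"
  proof (rule has_sum_Sigma[where f = "\<lambda>q. F (snd q, fst q - 2 * snd q)" and B = "\<lambda>k. {0..k div 2}"])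
    show "uniformly_continuous_on UNIV (\<lambda>(x::real, y). x + y)" by (rule isUCont_plus)
    show "((\<lambda>q. F (snd q, fst q - 2 * snd q)) has_sum S) (Sigma UNIV (\<lambda>k. {0..k div 2}))"
      using hA by (simp add: A_def)
    show "((\<lambda>j. F (snd (k, j), fst (k, j) - 2 * snd (k, j))) has_sum (\<Sum>j = 0..k div 2. F (j, k - 2*j))) {0..k div 2}"
      for k by (rule has_sum_finiteI) auto
  qed
  have eqs: "suminf (\<lambda>k. h_mu \<mu> k (real n) \<alpha> / gamma_mu \<mu> k * x ^ k * g ((real k + 2 * \<mu> * theta k) / real n)) = S"
    using has_sum_imp_sums[OF hk] unfolding F_def y_def z_def term_eq[OF mu] by (simp add: sums_iff)
  have pos: "exp y * e_mu \<mu> z > 0" using E_ge1[OF mu z] by (intro mult_pos_pos) auto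
  have "T_op \<alpha> \<mu> n g x = 1 / (exp y * e_mu \<mu> z) * S"
    unfolding T_op_def y_def z_def eqs ..
  hence "exp y * e_mu \<mu> z * T_op \<alpha> \<mu> n g x = S" using pos by (auto simp: field_simps)
  thus ?thesis using hS unfolding F_def y_def z_def by simp
qed



lemma hs_diff:
  fixes f g :: "'a \<Rightarrow> real"
  assumes "(f has_sum a) A" "(g has_sum b) A"
  shows "((\<lambda>x. f x - g x) has_sum (a - b)) A"
proof -
  have "((\<lambda>x. - g x) has_sum (- b)) A" using assms(2) by (simp add: has_sum_uminus)
  from has_sum_add[OF assms(1) this] show ?thesis by simp
qed

lemma abs_est:
  fixes w t :: "'a \<Rightarrow> real"
  assumes w0: "\<And>p. w p \<ge> 0" and hN: "(w has_sum N) UNIV" and Npos: "N > 0"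
    and h1: "((\<lambda>p. w p * (t p - x)) has_sum N*D1) UNIV"
    and h2: "((\<lambda>p. w p * (t p - x)^2) has_sum N*D2) UNIV"
    and hg: "((\<lambda>p. w p * g (t p)) has_sum N*Tg) UNIV"
    and bnd: "\<And>p. \<bar>g (t p) - g x - d*(t p - x)\<bar> \<le> c + K*(t p - x)^2"
  shows "\<bar>Tg - g x - d * D1\<bar> \<le> c + K*D2"
proof -
  have hr: "((\<lambda>p. w p * g (t p) - g x * w p - d * (w p * (t p - x))) has_sum
        (N*Tg - g x * N - d * (N*D1))) UNIV"
    by (intro hs_diff has_sum_cmult_right hg hN h1)
  have hb: "((\<lambda>p. c * w p + K * (w p * (t p - x)^2)) has_sum (c * N + K * (N*D2))) UNIV"
    by (intro has_sum_add has_sum_cmult_right hN h2)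
  have "norm (N*Tg - g x * N - d * (N*D1)) \<le> c * N + K * (N*D2)"
  proof (rule norm_infsum_le[OF hr hb])
    fix p :: 'a
    have e: "w p * g (t p) - g x * w p - d * (w p * (t p - x)) = w p * (g (t p) - g x - d*(t p - x))"
      by (simp add: algebra_simps)
    have "norm (w p * g (t p) - g x * w p - d * (w p * (t p - x)))
        = w p * \<bar>g (t p) - g x - d*(t p - x)\<bar>"
      unfolding e using w0[of p] by (simp add: abs_mult)
    also have "\<dots> \<le> w p * (c + K*(t p - x)^2)" by (intro mult_left_mono bnd w0)
    finally show "norm (w p * g (t p) - g x * w p - d * (w p * (t p - x))) \<le> c * w p + K * (w p * (t p - x)^2)"
      by (simp add: algebra_simps)
  qed
  moreover have "N*Tg - g x * N - d * (N*D1) = N * (Tg - g x - d * D1)" by (simp add: algebra_simps)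
  ultimately have "\<bar>N * (Tg - g x - d * D1)\<bar> \<le> N * (c + K*D2)"
    by (simp add: algebra_simps)
  hence "N * \<bar>Tg - g x - d * D1\<bar> \<le> N * (c + K*D2)"
    using Npos by (simp add: abs_mult)
  thus ?thesis using Npos by simp
qed

lemma zero_est:
  fixes w t :: "'a \<Rightarrow> real"
  assumes w0: "\<And>p. w p \<ge> 0" and hN: "(w has_sum N) UNIV" and Npos: "N > 0"
    and h2: "((\<lambda>p. w p * (t p - x)^2) has_sum 0) UNIV"
    and hg: "((\<lambda>p. w p * g (t p)) has_sum N*Tg) UNIV"
  shows "Tg = g x"
proof -
  have z: "w p * (t p - x)^2 = 0" for p
    by (rule nonneg_has_sum_le_0D[OF h2]) (auto intro: mult_nonneg_nonneg w0)
  have "w p * g (t p) = g x * w p" for p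
    using z[of p] by (cases "w p = 0") auto
  hence "(\<lambda>p. w p * g (t p)) = (\<lambda>p. g x * w p)" by (rule ext)
  hence "((\<lambda>p. g x * w p) has_sum N*Tg) UNIV" using hg by simp
  moreover have "((\<lambda>p. g x * w p) has_sum g x * N) UNIV" by (rule has_sum_cmult_right[OF hN])
  ultimately have "N*Tg = g x * N" using has_sum_unique by blast
  thus ?thesis using Npos by simp
qed



lemma moments:
  assumes mu: "\<mu> \<ge> 0" and al: "\<alpha> \<ge> 0" and x: "x \<ge> 0" and n: "n \<ge> 1"
  defines "y \<equiv> \<alpha> * x^2" and "z \<equiv> real n * x"
  shows "((\<lambda>p. wt \<mu> y z p * (tt \<mu> n p - x)) has_sum (exp y * e_mu \<mu> z) * (2*\<alpha>*x^2/real n)) UNIV"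
    and "((\<lambda>p. wt \<mu> y z p * (tt \<mu> n p - x)^2) has_sum
           (exp y * e_mu \<mu> z) * (chi \<alpha> \<mu> n x - 2*\<alpha>*x^2/real n)) UNIV"
proof -
  have y: "y \<ge> 0" and z: "z \<ge> 0" using al x by (auto simp: y_def z_def)
  have nr: "real n > 0" using n by simp
  have E: "e_mu \<mu> z \<ge> 1" using E_ge1[OF mu z] .
  note H0 = W0[OF mu y z] and H1 = W1[OF mu y z n] and H2 = W2[OF mu y z n]
  have "((\<lambda>p. wt \<mu> y z p * tt \<mu> n p - x * wt \<mu> y z p) has_sum
      (exp y * e_mu \<mu> z * ((2 * y + z) / real n) - x * (exp y * e_mu \<mu> z))) UNIV"
    by (intro hs_diff has_sum_cmult_right H0 H1)
  moreover have "(\<lambda>p. wt \<mu> y z p * tt \<mu> n p - x * wt \<mu> y z p) = (\<lambda>p. wt \<mu> y z p * (tt \<mu> n p - x))"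
    by (rule ext) (simp add: algebra_simps)
  moreover have "exp y * e_mu \<mu> z * ((2 * y + z) / real n) - x * (exp y * e_mu \<mu> z)
      = (exp y * e_mu \<mu> z) * (2*\<alpha>*x^2/real n)"
    using nr by (simp add: y_def z_def field_simps)
  ultimately show "((\<lambda>p. wt \<mu> y z p * (tt \<mu> n p - x)) has_sum (exp y * e_mu \<mu> z) * (2*\<alpha>*x^2/real n)) UNIV"
    by simp
  have "((\<lambda>p. wt \<mu> y z p * (tt \<mu> n p)^2 - (2*x) * (wt \<mu> y z p * tt \<mu> n p) + x^2 * wt \<mu> y z p) has_sum
      (exp y * ((4*(y^2+y) * e_mu \<mu> z + 4 * y * z * e_mu \<mu> z
        + z * (z * e_mu \<mu> z + e_mu \<mu> z + 2 * \<mu> * e_mu \<mu> (-z))) / (real n)^2)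
       - (2*x) * (exp y * e_mu \<mu> z * ((2 * y + z) / real n)) + x^2 * (exp y * e_mu \<mu> z))) UNIV"
    by (intro has_sum_add hs_diff has_sum_cmult_right H0 H1 H2)
  moreover have "(\<lambda>p. wt \<mu> y z p * (tt \<mu> n p)^2 - (2*x) * (wt \<mu> y z p * tt \<mu> n p) + x^2 * wt \<mu> y z p)
      = (\<lambda>p. wt \<mu> y z p * (tt \<mu> n p - x)^2)"
    by (rule ext) (simp add: algebra_simps power2_eq_square)
  moreover have "exp y * ((4*(y^2+y) * e_mu \<mu> z + 4 * y * z * e_mu \<mu> z
        + z * (z * e_mu \<mu> z + e_mu \<mu> z + 2 * \<mu> * e_mu \<mu> (-z))) / (real n)^2)
       - (2*x) * (exp y * e_mu \<mu> z * ((2 * y + z) / real n)) + x^2 * (exp y * e_mu \<mu> z)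
      = (exp y * e_mu \<mu> z) * (chi \<alpha> \<mu> n x - 2*\<alpha>*x^2/real n)"
    using nr E unfolding chi_def y_def z_def by (simp add: field_simps power2_eq_square power3_eq_cube)
  ultimately show "((\<lambda>p. wt \<mu> y z p * (tt \<mu> n p - x)^2) has_sum
           (exp y * e_mu \<mu> z) * (chi \<alpha> \<mu> n x - 2*\<alpha>*x^2/real n)) UNIV"
    by simp
qed



lemma ftc:
  fixes f :: "real \<Rightarrow> real"
  assumes "\<And>b. continuous_on {c..b} f" and "x > c"
  shows "((\<lambda>u. integral {c..u} f) has_real_derivative f x) (at x)"
proof -
  have "((\<lambda>u. integral {c..u} f) has_real_derivative f x) (at x within {c..x+1})"
    by (rule integral_has_real_derivative) (use assms in auto)
  moreover have "at x within {c..x+1} = at x"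
    by (rule at_within_interior) (use assms in auto)
  ultimately show ?thesis by simp
qed

lemma second_bound:
  fixes Q Q1 Q2 :: "real \<Rightarrow> real"
  assumes d1: "\<And>w. 0 \<le> w \<Longrightarrow> w \<le> h \<Longrightarrow> (Q has_real_derivative Q1 w) (at w)"
    and d2: "\<And>w. 0 \<le> w \<Longrightarrow> w \<le> h \<Longrightarrow> (Q1 has_real_derivative Q2 w) (at w)"
    and q0: "Q 0 = 0" and q10: "Q1 0 = 0"
    and b: "\<And>w. 0 \<le> w \<Longrightarrow> w \<le> h \<Longrightarrow> \<bar>Q2 w\<bar> \<le> W"
    and w: "0 \<le> w" "w \<le> h"
  shows "\<bar>Q w\<bar> \<le> W * w^2"
proof -
  have W0: "W \<ge> 0" using b[of 0] w by auto
  have b1: "\<bar>Q1 v\<bar> \<le> W * v" if v0: "0 \<le> v" and vh: "v \<le> h" for v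
  proof (cases "v = 0")
    case True thus ?thesis using q10 by simp
  next
    case False
    hence "0 < v" using v0 by simp
    have "\<forall>x. 0 \<le> x \<and> x \<le> v \<longrightarrow> DERIV Q1 x :> Q2 x" using d2 vh by auto
    then obtain \<xi> where \<xi>: "0 < \<xi>" "\<xi> < v" "Q1 v - Q1 0 = (v - 0) * Q2 \<xi>"
      using MVT2[OF \<open>0 < v\<close>, of Q1 Q2] by auto
    have "\<bar>Q1 v\<bar> = v * \<bar>Q2 \<xi>\<bar>" using \<xi> q10 \<open>0 < v\<close> by (simp add: abs_mult)
    also have "\<dots> \<le> v * W" using b[of \<xi>] \<xi> vh \<open>0<v\<close> by (intro mult_left_mono) auto
    finally show ?thesis by (simp add: mult.commute)
  qed
  show ?thesis
  proof (cases "w = 0")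
    case True thus ?thesis using q0 by simp
  next
    case False
    hence "0 < w" using w by simp
    then obtain \<xi> where \<xi>: "0 < \<xi>" "\<xi> < w" "Q w - Q 0 = (w - 0) * Q1 \<xi>"
      using MVT2[OF \<open>0 < w\<close>, of Q Q1] d1 w by auto
    have "\<bar>Q w\<bar> = w * \<bar>Q1 \<xi>\<bar>" using \<xi> q0 \<open>0 < w\<close> by (simp add: abs_mult)
    also have "\<dots> \<le> w * (W * w)" using b1[of \<xi>] \<xi> w W0 \<open>0<w\<close>
      by (intro mult_left_mono) (auto intro: order.trans[OF _ mult_left_mono])
    finally show ?thesis by (simp add: power2_eq_square algebra_simps)
  qed
qed

lemma lip_bound:
  fixes G1 G2 :: "real \<Rightarrow> real"
  assumes d2: "\<And>x. 0 \<le> x \<Longrightarrow> (G1 has_real_derivative G2 x) (at x)"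
    and b: "\<And>x. 0 \<le> x \<Longrightarrow> \<bar>G2 x\<bar> \<le> K"
    and u: "0 \<le> u" and v: "u \<le> v"
  shows "\<bar>G1 v - G1 u\<bar> \<le> K * (v - u)"
proof (cases "u = v")
  case True thus ?thesis by simp
next
  case False
  hence "u < v" using v by simp
  then obtain \<xi> where \<xi>: "u < \<xi>" "\<xi> < v" "G1 v - G1 u = (v - u) * G2 \<xi>"
    using MVT2[OF \<open>u < v\<close>, of G1 G2] d2 u by auto
  have "\<bar>G1 v - G1 u\<bar> = (v - u) * \<bar>G2 \<xi>\<bar>" using \<xi> \<open>u < v\<close> by (simp add: abs_mult)
  also have "\<dots> \<le> (v - u) * K" using b[of \<xi>] \<xi> u \<open>u<v\<close> by (intro mult_left_mono) auto
  finally show ?thesis by (simp add: mult.commute)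
qed

lemma taylor_bound:
  fixes G G1 G2 :: "real \<Rightarrow> real"
  assumes d1: "\<And>x. 0 \<le> x \<Longrightarrow> (G has_real_derivative G1 x) (at x)"
    and d2: "\<And>x. 0 \<le> x \<Longrightarrow> (G1 has_real_derivative G2 x) (at x)"
    and b: "\<And>x. 0 \<le> x \<Longrightarrow> \<bar>G2 x\<bar> \<le> K"
    and x: "0 \<le> x" and t: "0 \<le> t"
  shows "\<bar>G t - G x - G1 x * (t - x)\<bar> \<le> K * (t - x)^2"
proof -
  have K0: "K \<ge> 0" using b[of 0] by auto
  consider "t = x" | "x < t" | "t < x" by linarith
  thus ?thesis
  proof cases
    case 1 thus ?thesis by simp
  next
    case 2
    then obtain \<xi> where \<xi>: "x < \<xi>" "\<xi> < t" "G t - G x = (t - x) * G1 \<xi>"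
      using MVT2[OF 2, of G G1] d1 x by auto
    have "G t - G x - G1 x * (t - x) = (t - x) * (G1 \<xi> - G1 x)"
      using \<xi>(3) by (simp add: algebra_simps)
    hence "\<bar>G t - G x - G1 x * (t - x)\<bar> = (t - x) * \<bar>G1 \<xi> - G1 x\<bar>"
      using 2 by (simp add: abs_mult)
    also have "\<dots> \<le> (t - x) * (K * (\<xi> - x))"
      using lip_bound[OF d2 b x, of \<xi>] \<xi> 2 by (intro mult_left_mono) auto
    also have "\<dots> \<le> (t - x) * (K * (t - x))"
      using \<xi> 2 K0 by (intro mult_left_mono) auto
    finally show ?thesis by (simp add: power2_eq_square algebra_simps)
  next
    case 3
    then obtain \<xi> where \<xi>: "t < \<xi>" "\<xi> < x" "G x - G t = (x - t) * G1 \<xi>"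
      using MVT2[OF 3, of G G1] d1 t by auto
    have "G t - G x - G1 x * (t - x) = (x - t) * (G1 x - G1 \<xi>)"
      using \<xi>(3) by (simp add: algebra_simps)
    hence "\<bar>G t - G x - G1 x * (t - x)\<bar> = (x - t) * \<bar>G1 x - G1 \<xi>\<bar>"
      using 3 by (simp add: abs_mult)
    also have "\<dots> \<le> (x - t) * (K * (x - \<xi>))"
      using lip_bound[OF d2 b, of \<xi> x] \<xi> 3 t by (intro mult_left_mono) auto
    also have "\<dots> \<le> (x - t) * (K * (x - t))"
      using \<xi> 3 K0 by (intro mult_left_mono) auto
    finally show ?thesis by (simp add: power2_eq_square algebra_simps)
  qed
qed

lemma deriv_bound:
  fixes G G1 G2 :: "real \<Rightarrow> real"
  assumes d1: "\<And>x. 0 \<le> x \<Longrightarrow> (G has_real_derivative G1 x) (at x)"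
    and d2: "\<And>x. 0 \<le> x \<Longrightarrow> (G1 has_real_derivative G2 x) (at x)"
    and b: "\<And>x. 0 \<le> x \<Longrightarrow> \<bar>G2 x\<bar> \<le> K"
    and x: "0 \<le> x"
  shows "\<bar>G1 x\<bar> \<le> \<bar>G (x+1)\<bar> + \<bar>G x\<bar> + K"
proof -
  obtain \<xi> where \<xi>: "x < \<xi>" "\<xi> < x+1" "G (x+1) - G x = (x + 1 - x) * G1 \<xi>"
    using MVT2[of x "x+1" G G1] d1 x by auto
  have "\<bar>G1 \<xi> - G1 x\<bar> \<le> K * (\<xi> - x)" using lip_bound[OF d2 b x, of \<xi>] \<xi> by auto
  also have "\<dots> \<le> K" using b[of 0] \<xi> by (auto intro: mult_left_le)
  moreover have "G1 \<xi> = G (x+1) - G x" using \<xi>(3) by simp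
  ultimately show ?thesis by linarith
qed



lemma smoothing:
  fixes g :: "real \<Rightarrow> real"
  assumes cont: "continuous_on {0..} g" and h: "h > 0"
    and om: "\<And>t s. t \<ge> 0 \<Longrightarrow> 0 < s \<Longrightarrow> s \<le> h \<Longrightarrow> \<bar>g (t + 2 * s) - 2 * g (t + s) + g t\<bar> \<le> W"
  shows "\<exists>G G1. (\<forall>t\<ge>0. \<bar>g t - G t\<bar> \<le> 6*W) \<and>
     (\<forall>x\<ge>0. \<forall>t\<ge>0. \<bar>G t - G x - G1 x * (t - x)\<bar> \<le> (9*W/h^2) * (t - x)^2) \<and>
     (\<forall>x\<ge>0. \<bar>G1 x\<bar> \<le> \<bar>G (x+1)\<bar> + \<bar>G x\<bar> + 9*W/h^2)"
proof -
  define ge where "ge t = g (max t 0)" for t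
  have cge: "continuous_on UNIV ge"
  proof -
    have "continuous_on UNIV (\<lambda>t::real. max t 0)" by (intro continuous_intros)
    moreover have "(\<lambda>t::real. max t 0) ` UNIV \<subseteq> {0..}" by auto
    ultimately have "continuous_on UNIV (\<lambda>t. g (max t 0))" by (rule continuous_on_compose2[OF cont])
    thus ?thesis by (simp add: ge_def[abs_def])
  qed
  have ge0: "t \<ge> 0 \<Longrightarrow> ge t = g t" for t by (simp add: ge_def)
  define Phi where "Phi u = integral {-1..u} ge" for u
  define Psi where "Psi u = integral {-1..u} Phi" for u
  have dPhi0: "x > -1 \<Longrightarrow> (Phi has_real_derivative ge x) (at x)" for x
    unfolding Phi_def[abs_def] by (rule ftc) (auto intro: continuous_on_subset[OF cge])
  have cPhi: "continuous_on {-1..b} Phi" for b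
    unfolding Phi_def[abs_def]
    by (rule indefinite_integral_continuous_1, rule integrable_continuous_real)
       (auto intro: continuous_on_subset[OF cge])
  have dPsi0: "x > -1 \<Longrightarrow> (Psi has_real_derivative Phi x) (at x)" for x
    unfolding Psi_def[abs_def] by (rule ftc) (auto intro: cPhi)
  have sPsi: "((\<lambda>x. Psi (x + c)) has_real_derivative Phi (x + c)) (at x)" if "x + c > -1" for x c
  proof -
    have "((\<lambda>x. x + c) has_real_derivative 1) (at x)" by (auto intro!: derivative_eq_intros)
    from DERIV_chain2[where f=Psi and g="\<lambda>x. x + c", OF dPsi0[OF that] this] show ?thesis by simp
  qed
  have sPhi: "((\<lambda>x. Phi (x + c)) has_real_derivative ge (x + c)) (at x)" if "x + c > -1" for x c
  proof -
    have "((\<lambda>x. x + c) has_real_derivative 1) (at x)" by (auto intro!: derivative_eq_intros)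
    from DERIV_chain2[where f=Phi and g="\<lambda>x. x + c", OF dPhi0[OF that] this] show ?thesis by simp
  qed
  have lPsi: "((\<lambda>w. Psi (k*w + c)) has_real_derivative D) (at w)" if "k*w + c > -1" "D = Phi (k*w + c) * k" for w c k D
  proof -
    have "((\<lambda>w. k*w + c) has_real_derivative k) (at w)" by (auto intro!: derivative_eq_intros)
    from DERIV_chain2[where f=Psi and g="\<lambda>w. k*w + c", OF dPsi0[OF that(1)] this] show ?thesis using that(2) by simp
  qed
  have lPhi: "((\<lambda>w. Phi (k*w + c)) has_real_derivative D) (at w)" if "k*w + c > -1" "D = ge (k*w + c) * k" for w c k D
  proof -
    have "((\<lambda>w. k*w + c) has_real_derivative k) (at w)" by (auto intro!: derivative_eq_intros)
    from DERIV_chain2[where f=Phi and g="\<lambda>w. k*w + c", OF dPhi0[OF that(1)] this] show ?thesis using that(2) by simp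
  qed
  define a where "a = h/2"
  have a: "a > 0" using h by (simp add: a_def)
  define G where "G x = (2*(Psi(x+2*a) - 2*Psi(x+a) + Psi x) - (Psi(x+4*a) - 2*Psi(x+2*a) + Psi x)/4)/a^2" for x
  define G1 where "G1 x = (2*(Phi(x+2*a) - 2*Phi(x+a) + Phi x) - (Phi(x+4*a) - 2*Phi(x+2*a) + Phi x)/4)/a^2" for x
  define G2 where "G2 x = (2*(ge(x+2*a) - 2*ge(x+a) + ge x) - (ge(x+4*a) - 2*ge(x+2*a) + ge x)/4)/a^2" for x
  define K where "K = 9*W/h^2"
  have dG: "(G has_real_derivative G1 x) (at x)" if "0 \<le> x" for x
    unfolding G_def[abs_def] G1_def
    using that a
    by (intro DERIV_cdivide DERIV_diff DERIV_add DERIV_cmult sPsi dPsi0) auto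
  have dG1: "(G1 has_real_derivative G2 x) (at x)" if "0 \<le> x" for x
    unfolding G1_def[abs_def] G2_def
    using that a
    by (intro DERIV_cdivide DERIV_diff DERIV_add DERIV_cmult sPhi dPhi0) auto
  have W0: "W \<ge> 0" using om[of 0 h] h by (smt (verit) abs_ge_zero)
  have bG2: "\<bar>G2 x\<bar> \<le> K" if x: "0 \<le> x" for x
  proof -
    have e: "G2 x = (2*(g(x+2*a) - 2*g(x+a) + g x) - (g(x+2*(2*a)) - 2*g(x+2*a) + g x)/4)/a^2"
      unfolding G2_def using x a by (simp add: ge0 mult.assoc)
    have b1: "\<bar>g(x+2*a) - 2*g(x+a) + g x\<bar> \<le> W" using om[of x a] x a h by (simp add: a_def)
    have b2: "\<bar>g(x+2*(2*a)) - 2*g(x+2*a) + g x\<bar> \<le> W" using om[of x "2*a"] x a h by (simp add: a_def)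
    have c: "\<bar>2*(g(x+2*a) - 2*g(x+a) + g x) - (g(x+2*(2*a)) - 2*g(x+2*a) + g x)/4\<bar> \<le> 2*W + W/4"
    proof -
      have gen: "\<bar>2*A - B/4\<bar> \<le> 2*W + W/4" if "\<bar>A\<bar> \<le> W" "\<bar>B\<bar> \<le> W" for A B :: real
        using that by arith
      show ?thesis by (rule gen[OF b1 b2])
    qed
    have gen2: "\<bar>N/D\<bar> \<le> C/D" if "D > 0" "\<bar>N\<bar> \<le> C" for N D C :: real
      using that by (simp add: abs_divide divide_right_mono)
    have "\<bar>G2 x\<bar> \<le> (2*W + W/4)/a^2" unfolding e by (rule gen2[OF _ c]) (use a in simp)
    also have "\<dots> = K" by (simp add: K_def a_def field_simps)
    finally show ?thesis .
  qed
  have bGg: "\<bar>g x - G x\<bar> \<le> 6*W" if x: "0 \<le> x" for x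
  proof -
    define Q where "Q w = 2*(Psi(1*w + x) - Psi x - w*Phi x) - (Psi(2*w + x) - Psi x - 2*w*Phi x)/4 - g x * w^2/2" for w
    define Q1 where "Q1 w = 2*(Phi(1*w + x) - Phi x) - (Phi(2*w + x) - Phi x)/2 - g x * w" for w
    define Q2 where "Q2 w = 2*ge(1*w + x) - ge(2*w + x) - g x" for w
    have dQ: "(Q has_real_derivative Q1 w) (at w)" if "0 \<le> w" "w \<le> h" for w
    proof -
      have "((\<lambda>w. 2*(Psi(1*w + x) - Psi x - w*Phi x) - (Psi(2*w + x) - Psi x - (2*w)*Phi x)/4 - g x * w^2/2)
         has_real_derivative (2*(Phi(1*w + x)*1 - 0 - 1*Phi x) - (Phi(2*w + x)*2 - 0 - (2*1)*Phi x)/4 - g x * (real 2 * w^(2-1))/2)) (at w)"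
        by (intro DERIV_diff DERIV_cmult DERIV_cdivide DERIV_cmult_right DERIV_ident DERIV_const DERIV_pow lPsi refl)
          (use that x in \<open>auto intro!: derivative_eq_intros\<close>)
      moreover have "(2*(Phi(1*w + x)*1 - 0 - 1*Phi x) - (Phi(2*w + x)*2 - 0 - (2*1)*Phi x)/4 - g x * (real 2 * w^(2-1))/2) = Q1 w"
        by (simp add: Q1_def field_simps)
      moreover have "(\<lambda>w. 2*(Psi(1*w + x) - Psi x - w*Phi x) - (Psi(2*w + x) - Psi x - (2*w)*Phi x)/4 - g x * w^2/2) = Q"
        by (rule ext) (simp add: Q_def)
      ultimately show ?thesis by simp
    qed
    have dQ1: "(Q1 has_real_derivative Q2 w) (at w)" if "0 \<le> w" "w \<le> h" for w
    proof -
      have "((\<lambda>w. 2*(Phi(1*w + x) - Phi x) - (Phi(2*w + x) - Phi x)/2 - g x * w)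
         has_real_derivative (2*(ge(1*w + x)*1 - 0) - (ge(2*w + x)*2 - 0)/2 - g x * 1)) (at w)"
        by (intro DERIV_diff DERIV_cmult DERIV_cdivide DERIV_cmult_right DERIV_ident DERIV_const lPhi refl)
          (use that x in auto)
      moreover have "(2*(ge(1*w + x)*1 - 0) - (ge(2*w + x)*2 - 0)/2 - g x * 1) = Q2 w"
        by (simp add: Q2_def algebra_simps)
      moreover have "(\<lambda>w. 2*(Phi(1*w + x) - Phi x) - (Phi(2*w + x) - Phi x)/2 - g x * w) = Q1"
        by (rule ext) (simp add: Q1_def)
      ultimately show ?thesis by simp
    qed
    have bQ2: "\<bar>Q2 w\<bar> \<le> W" if "0 \<le> w" "w \<le> h" for w
    proof (cases "w = 0")
      case True thus ?thesis using W0 x by (simp add: Q2_def ge0)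
    next
      case False
      hence "\<bar>g (x + 2*w) - 2 * g (x + w) + g x\<bar> \<le> W" using om[of x w] that x by simp
      moreover have "Q2 w = - (g (x + 2*w) - 2 * g (x + w) + g x)"
        using that x by (simp add: Q2_def ge0 add.commute)
      ultimately show ?thesis by simp
    qed
    have q0: "Q 0 = 0" and q10: "Q1 0 = 0" by (simp_all add: Q_def Q1_def)
    have B1: "\<bar>Q (2*a)\<bar> \<le> W * (2*a)^2"
      by (rule second_bound[OF dQ dQ1 q0 q10 bQ2]) (use a in \<open>auto simp: a_def\<close>)
    have B2: "\<bar>Q a\<bar> \<le> W * a^2"
      by (rule second_bound[OF dQ dQ1 q0 q10 bQ2]) (use a in \<open>auto simp: a_def\<close>)
    have id: "G x - g x = (Q (2*a) - 2 * Q a) / a^2"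
      using a unfolding G_def Q_def by (simp add: field_simps power2_eq_square)
    have "\<bar>Q (2*a) - 2 * Q a\<bar> \<le> 6*W*a^2" using B1 B2 by (simp add: power2_eq_square)
    hence "\<bar>(Q (2*a) - 2 * Q a) / a^2\<bar> \<le> 6*W" using a by (simp add: abs_divide pos_divide_le_eq)
    thus ?thesis using id by (simp add: abs_minus_commute)
  qed
  show ?thesis
    using bGg taylor_bound[OF dG dG1 bG2] deriv_bound[OF dG dG1 bG2] unfolding K_def
    by blast
qed



lemma supnorm_ge:
  assumes bd: "bounded (g ` {0..})" and t: "t \<ge> 0"
  shows "\<bar>g t\<bar> \<le> supnorm g"
proof -
  obtain B where B: "\<And>s. s \<in> {0..} \<Longrightarrow> \<bar>g s\<bar> \<le> B" using bd by (auto simp: bounded_iff)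
  have "bdd_above ((\<lambda>s. \<bar>g s\<bar>) ` {0..})" using B by (auto intro!: bdd_aboveI2)
  thus ?thesis unfolding supnorm_def using t by (intro cSUP_upper) auto
qed

lemma supnorm_nonneg: "bounded (g ` {0..}) \<Longrightarrow> supnorm g \<ge> 0"
  using supnorm_ge[of g 0] by (meson abs_ge_zero order_trans order_refl)

lemma supnorm_le:
  assumes "\<And>t. t \<ge> 0 \<Longrightarrow> \<bar>f t\<bar> \<le> C"
  shows "supnorm f \<le> C"
  unfolding supnorm_def using assms by (intro cSUP_least) auto

lemma diff2_bound:
  assumes bd: "bounded (g ` {0..})" and t: "t \<ge> 0" and s: "s \<ge> 0"
  shows "\<bar>g (t + 2 * s) - 2 * g (t + s) + g t\<bar> \<le> 4 * supnorm g"
proof -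
  have "\<bar>g (t + 2 * s)\<bar> \<le> supnorm g" "\<bar>g (t + s)\<bar> \<le> supnorm g" "\<bar>g t\<bar> \<le> supnorm g"
    using supnorm_ge[OF bd] t s by auto
  thus ?thesis by arith
qed

lemma omega2_ge:
  assumes bd: "bounded (g ` {0..})" and t: "t \<ge> 0" and s: "0 < s" "s \<le> h"
  shows "\<bar>g (t + 2 * s) - 2 * g (t + s) + g t\<bar> \<le> omega2 g h"
proof -
  let ?D = "\<lambda>s. supnorm (\<lambda>t. g (t + 2 * s) - 2 * g (t + s) + g t)"
  have Db: "?D s' \<le> 4 * supnorm g" if "s' > 0" for s'
    by (rule supnorm_le) (use diff2_bound[OF bd] that in auto)
  have "\<bar>g (t + 2 * s) - 2 * g (t + s) + g t\<bar> \<le> ?D s"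
  proof -
    have "bounded ((\<lambda>t. g (t + 2 * s) - 2 * g (t + s) + g t) ` {0..})"
      unfolding bounded_iff using diff2_bound[OF bd] s by (intro exI[of _ "4 * supnorm g"]) auto
    from supnorm_ge[OF this t] show ?thesis .
  qed
  also have "?D s \<le> (SUP s\<in>{0<..h}. ?D s)"
    using s Db by (intro cSUP_upper) (auto intro!: bdd_aboveI2)
  also have "\<dots> = omega2 g h" using s by (simp add: omega2_def)
  finally show ?thesis .
qed

lemma omega2_nonneg:
  assumes bd: "bounded (g ` {0..})"
  shows "omega2 g h \<ge> 0"
proof (cases "h \<le> 0")
  case True thus ?thesis by (simp add: omega2_def)
next
  case False
  thus ?thesis using omega2_ge[OF bd, of 0 h h] by (meson abs_ge_zero order_trans not_le order_refl)
qed



theorem theorem9: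
  fixes \<alpha> \<mu> :: real
  assumes "\<alpha> \<ge> 0" and "\<mu> \<ge> 0"
  shows "\<exists>M>0. \<forall>g n x.
           uniformly_continuous_on {0..} g \<longrightarrow> bounded (g ` {0..}) \<longrightarrow>
           n \<ge> 1 \<longrightarrow> x \<ge> 0 \<longrightarrow>
           \<bar>T_op \<alpha> \<mu> n g x - g x\<bar>
             \<le> 2 * M * (min 1 (chi \<alpha> \<mu> n x / 2) * supnorm g
                         + omega2 g (sqrt (chi \<alpha> \<mu> n x / 2)))"
proof (intro exI[of _ 36] conjI allI impI)
  show "(0::real) < 36" by simp
  fix g :: "real \<Rightarrow> real" and n :: nat and x :: real
  assume uc: "uniformly_continuous_on {0..} g" and bd: "bounded (g ` {0..})"
    and n: "n \<ge> 1" and x: "x \<ge> 0"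
  note al = assms(1) and mu = assms(2)
  define y where "y = \<alpha> * x^2"
  define z where "z = real n * x"
  have y: "y \<ge> 0" and z: "z \<ge> 0" using al x by (auto simp: y_def z_def)
  define N where "N = exp y * e_mu \<mu> z"
  have Npos: "N > 0" using E_ge1[OF mu z] by (simp add: N_def)
  define c where "c = chi \<alpha> \<mu> n x"
  define D1 where "D1 = 2*\<alpha>*x^2/real n"
  define D2 where "D2 = c - D1"
  define S where "S = supnorm g"
  have S0: "S \<ge> 0" using supnorm_nonneg[OF bd] by (simp add: S_def)
  have gS: "\<And>t. t \<ge> 0 \<Longrightarrow> \<bar>g t\<bar> \<le> S" using supnorm_ge[OF bd] by (simp add: S_def)
  define T where "T = T_op \<alpha> \<mu> n g x"
  let ?w = "wt \<mu> y z" and ?t = "tt \<mu> n"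
  have w0: "\<And>p. ?w p \<ge> 0" using wt_nonneg[OF mu y z] .
  have hN: "(?w has_sum N) UNIV" using W0[OF mu y z] by (simp add: N_def)
  have h1: "((\<lambda>p. ?w p * (?t p - x)) has_sum N*D1) UNIV"
    using moments(1)[OF mu al x n] by (simp add: N_def D1_def y_def z_def)
  have h2: "((\<lambda>p. ?w p * (?t p - x)^2) has_sum N*D2) UNIV"
    using moments(2)[OF mu al x n] by (simp add: N_def D1_def D2_def c_def y_def z_def)
  have hg: "((\<lambda>p. ?w p * g (?t p)) has_sum N*T) UNIV"
    using T_pairs[OF mu al x n gS] by (simp add: N_def T_def y_def z_def mult.commute)
  have D1_0: "D1 \<ge> 0" using al x by (simp add: D1_def)
  have D2_0: "D2 \<ge> 0"
  proof -
    have "N*D2 \<ge> 0" by (rule has_sum_nonneg[OF h2]) (simp add: w0)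
    thus ?thesis using Npos by (simp add: zero_le_mult_iff)
  qed
  have c0: "c \<ge> 0" using D1_0 D2_0 by (simp add: D2_def)
  define om where "om = omega2 g (sqrt (c/2))"
  have om0: "om \<ge> 0" using omega2_nonneg[OF bd] by (simp add: om_def)
  have tt0: "\<And>p. ?t p \<ge> 0" using tt_nonneg[OF mu] .
  have goal: "\<bar>T - g x\<bar> \<le> 2 * 36 * (min 1 (c / 2) * S + om)"
  proof -
    consider "c = 0" | "c/2 > 1" | "0 < c" "c/2 \<le> 1" using c0 by linarith
    thus ?thesis
    proof cases
      case 1
      hence "D2 = 0" using D1_0 D2_0 by (simp add: D2_def)
      hence "((\<lambda>p. ?w p * (?t p - x)^2) has_sum 0) UNIV" using h2 by simp
      from zero_est[OF w0 hN Npos this hg] have "T = g x" .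
      thus ?thesis using S0 om0 c0 by simp
    next
      case 2
      have "\<bar>T - g x - 0 * D1\<bar> \<le> 2*S + 0*D2"
      proof (rule abs_est[OF w0 hN Npos h1 h2 hg])
        fix p show "\<bar>g (?t p) - g x - 0 * (?t p - x)\<bar> \<le> 2*S + 0 * (?t p - x)^2"
          using gS[OF tt0[of p]] gS[OF x] by simp
      qed
      hence "\<bar>T - g x\<bar> \<le> 2*S" by simp
      moreover have "min 1 (c/2) = 1" using 2 by simp
      ultimately show ?thesis using S0 om0 by simp
    next
      case 3
      define \<delta> where "\<delta> = c/2"
      have d: "0 < \<delta>" "\<delta> \<le> 1" using 3 by (auto simp: \<delta>_def)
      define h where "h = sqrt \<delta>"
      have h: "h > 0" and hh: "h^2 = \<delta>" using d by (auto simp: h_def)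
      have omb: "\<And>t s. t \<ge> 0 \<Longrightarrow> 0 < s \<Longrightarrow> s \<le> h \<Longrightarrow> \<bar>g (t + 2 * s) - 2 * g (t + s) + g t\<bar> \<le> om"
        using omega2_ge[OF bd] by (simp add: om_def h_def \<delta>_def)
      obtain G G1 where Gg: "\<forall>t\<ge>0. \<bar>g t - G t\<bar> \<le> 6 * om"
        and Gt: "\<forall>x\<ge>0. \<forall>t\<ge>0. \<bar>G t - G x - G1 x * (t - x)\<bar> \<le> (9 * om/h^2) * (t - x)^2"
        and G1b: "\<forall>x\<ge>0. \<bar>G1 x\<bar> \<le> \<bar>G (x+1)\<bar> + \<bar>G x\<bar> + 9 * om/h^2"
        using smoothing[OF uniformly_continuous_imp_continuous[OF uc] h omb] by blast
      define K where "K = 9 * om/\<delta>"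
      have K0: "K \<ge> 0" using om0 d by (simp add: K_def)
      have e1: "\<bar>T - g x - G1 x * D1\<bar> \<le> 12 * om + K*D2"
      proof (rule abs_est[OF w0 hN Npos h1 h2 hg])
        fix p
        have a1: "\<bar>g (?t p) - G (?t p)\<bar> \<le> 6 * om" using Gg tt0 by blast
        have a2: "\<bar>G (?t p) - G x - G1 x * (?t p - x)\<bar> \<le> K * (?t p - x)^2"
          using Gt x tt0 hh by (simp add: K_def)
        have a3: "\<bar>g x - G x\<bar> \<le> 6 * om" using Gg x by blast
        show "\<bar>g (?t p) - g x - G1 x * (?t p - x)\<bar> \<le> 12 * om + K * (?t p - x)^2"
          using a1 a2 a3 by arith
      qed
      have KD2: "K * D2 \<le> 18 * om"
      proof -
        have "D2 \<le> 2*\<delta>" using D1_0 by (simp add: D2_def \<delta>_def)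
        hence "K * D2 \<le> K * (2*\<delta>)" using K0 by (intro mult_left_mono)
        also have "\<dots> = 18 * om" using d by (simp add: K_def)
        finally show ?thesis .
      qed
      have G1x: "\<bar>G1 x\<bar> \<le> 2*S + 12 * om + K"
      proof -
        have x1: "x + 1 \<ge> 0" using x by simp
        have "\<bar>g (x+1) - G (x+1)\<bar> \<le> 6 * om" "\<bar>g (x+1)\<bar> \<le> S" using Gg gS[OF x1] x1 by auto
        hence A: "\<bar>G (x+1)\<bar> \<le> S + 6 * om" by arith
        have "\<bar>g x - G x\<bar> \<le> 6 * om" "\<bar>g x\<bar> \<le> S" using Gg gS[OF x] x by auto
        hence B: "\<bar>G x\<bar> \<le> S + 6 * om" by arith
        have C: "\<bar>G1 x\<bar> \<le> \<bar>G (x+1)\<bar> + \<bar>G x\<bar> + K" using G1b x hh by (simp add: K_def)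
        show ?thesis using A B C by linarith
      qed
      have D1d: "D1 \<le> 2*\<delta>" using D2_0 by (simp add: D2_def \<delta>_def)
      have G1D1: "\<bar>G1 x\<bar> * D1 \<le> (2*S + 12 * om + K) * (2*\<delta>)"
        using G1x D1d D1_0 by (intro mult_mono) auto
      also have "\<dots> = 4*\<delta>*S + 24*\<delta> * om + 18 * om" using d by (simp add: K_def field_simps)
      also have "\<dots> \<le> 4*\<delta>*S + 42 * om"
      proof -
        have "\<delta> * om \<le> om" using d om0 by (intro mult_left_le_one_le) auto
        thus ?thesis by linarith
      qed
      finally have G1D1': "\<bar>G1 x\<bar> * D1 \<le> 4*\<delta>*S + 42 * om" .
      have tri0: "\<bar>T - g x\<bar> \<le> \<bar>T - g x - G1 x * D1\<bar> + \<bar>G1 x * D1\<bar>"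
        by (rule order.trans[OF _ abs_triangle_ineq]) simp
      have "\<bar>G1 x * D1\<bar> = \<bar>G1 x\<bar> * D1" using D1_0 by (simp add: abs_mult)
      hence "\<bar>T - g x\<bar> \<le> \<bar>T - g x - G1 x * D1\<bar> + \<bar>G1 x\<bar> * D1" using tri0 by simp
      also have "\<dots> \<le> 72 * om + 4*\<delta>*S" using e1 KD2 G1D1' by linarith
      also have "\<dots> \<le> 2 * 36 * (min 1 (c / 2) * S + om)"
        using d S0 om0 by (simp add: \<delta>_def min_def mult_left_mono)
      finally show ?thesis .
    qed
  qed
  thus "\<bar>T_op \<alpha> \<mu> n g x - g x\<bar>
             \<le> 2 * 36 * (min 1 (chi \<alpha> \<mu> n x / 2) * supnorm g
                         + omega2 g (sqrt (chi \<alpha> \<mu> n x / 2)))"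
    by (simp add: T_def c_def S_def om_def)
qed


end
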